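(* Let $(X,S)$ be an $S$-metric space, $r\ge0$, $\{x_n\}$ a sequence in $X$, and $\{x_{n_p}\}_{p\in\mathbb N}$ a subsequence (with $n_1<n_2<\cdots$) such that $\delta(\{n_1,n_2,\dots\})=1$. Then $st\text{-}LIM^r x_n\subseteq st\text{-}LIM^r x_{n_p}$.
   Context: An $S$-metric on a nonempty set $X$ is a function $S:X^3\to[0,\infty)$ such that for all $x,y,z,a\in X$: $S(x,y,z)=0$ if and only if $x=y=z$, and $S(x,y,z)\le S(x,x,a)+S(y,y,a)+S(z,z,a)$. For $B\subset\mathbb N$ the natural density is $\delta(B)=\lim_{n\to\infty}\frac{|\{k\in B:k\le n\}|}{n}$ when the limit exists. For $r\ge0$, a sequence $\{y_n\}$ is $r$-statistically convergent to $x$ if for every $\varepsilon>0$, $\delta(\{n\in\mathbb N: S(y_n,y_n,x)\ge r+\varepsilon\})=0$; $st\text{-}LIM^r y_n$ denotes the set of all such $x\in X$. *)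

theory Defs
  imports "HOL-Analysis.Analysis"
begin

definition S_metric :: "'a set \<Rightarrow> ('a \<Rightarrow> 'a \<Rightarrow> 'a \<Rightarrow> real) \<Rightarrow> bool" where
  "S_metric X S \<longleftrightarrow> X \<noteq> {} \<and>
     (\<forall>x\<in>X. \<forall>y\<in>X. \<forall>z\<in>X. S x y z \<ge> 0) \<and>
     (\<forall>x\<in>X. \<forall>y\<in>X. \<forall>z\<in>X. S x y z = 0 \<longleftrightarrow> x = y \<and> y = z) \<and>
     (\<forall>x\<in>X. \<forall>y\<in>X. \<forall>z\<in>X. \<forall>a\<in>X. S x y z \<le> S x x a + S y y a + S z z a)"

text \<open>Natural density of B, a subset of the positive integers (only elements 1..n are counted).\<close>
definition has_natural_density :: "nat set \<Rightarrow> real \<Rightarrow> bool" where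
  "has_natural_density B d \<longleftrightarrow>
     (\<lambda>n. real (card {k \<in> B. 1 \<le> k \<and> k \<le> n}) / real n) \<longlonglongrightarrow> d"

definition st_LIM :: "'a set \<Rightarrow> ('a \<Rightarrow> 'a \<Rightarrow> 'a \<Rightarrow> real) \<Rightarrow> real \<Rightarrow> (nat \<Rightarrow> 'a) \<Rightarrow> 'a set" where
  "st_LIM X S r y = {x \<in> X. \<forall>\<epsilon>>0.
      has_natural_density {n. 1 \<le> n \<and> S (y n) (y n) x \<ge> r + \<epsilon>} 0}"

end

theory Submission
  imports Defs
begin

lemma key:
  fixes A :: "nat set" and ns :: "nat \<Rightarrow> nat"
  assumes dA: "has_natural_density A 0" and sm: "strict_mono ns"
    and d1: "has_natural_density (ns ` {1..}) 1"
  shows "has_natural_density {p. 1 \<le> p \<and> ns p \<in> A} 0"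
proof -
  define a where "a = (\<lambda>n. real (card {k \<in> A. 1 \<le> k \<and> k \<le> n}) / real n)"
  define c where "c = (\<lambda>n. real (card {k \<in> ns ` {1..}. 1 \<le> k \<and> k \<le> n}) / real n)"
  have a0: "a \<longlonglongrightarrow> 0" using dA unfolding has_natural_density_def a_def .
  have c1: "c \<longlonglongrightarrow> 1" using d1 unfolding has_natural_density_def c_def .
  have a0s: "(\<lambda>n. a (ns n)) \<longlonglongrightarrow> 0" using LIMSEQ_subseq_LIMSEQ[OF a0 sm] by (simp add: o_def)
  have c1s: "(\<lambda>n. c (ns n)) \<longlonglongrightarrow> 1" using LIMSEQ_subseq_LIMSEQ[OF c1 sm] by (simp add: o_def)
  have inc: "\<And>n. n \<le> ns n" using sm by (simp add: strict_mono_imp_increasing)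
  have "\<forall>\<^sub>F n in sequentially. c (ns n) > 1/2"
    using c1s by (rule order_tendstoD) simp
  moreover have "\<forall>\<^sub>F n in sequentially. n \<ge> 1" by (rule eventually_ge_at_top)
  ultimately have ev: "\<forall>\<^sub>F n in sequentially. real (ns n) \<le> 2 * real n"
  proof eventually_elim
    case (elim n)
    have sub: "{k \<in> ns ` {1..}. 1 \<le> k \<and> k \<le> ns n} \<subseteq> ns ` {1..n}"
    proof
      fix k assume "k \<in> {k \<in> ns ` {1..}. 1 \<le> k \<and> k \<le> ns n}"
      then obtain p where "p \<ge> 1" "k = ns p" "ns p \<le> ns n" by auto
      then have "p \<le> n" using sm by (simp add: strict_mono_less_eq)
      then show "k \<in> ns ` {1..n}" using \<open>p \<ge> 1\<close> \<open>k = ns p\<close> by auto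
    qed
    have "card {k \<in> ns ` {1..}. 1 \<le> k \<and> k \<le> ns n} \<le> card (ns ` {1..n})"
      by (rule card_mono[OF _ sub]) simp
    also have "\<dots> \<le> n" using card_image_le[of "{1..n}" ns] by simp
    finally have le: "card {k \<in> ns ` {1..}. 1 \<le> k \<and> k \<le> ns n} \<le> n" .
    have pos: "real (ns n) > 0" using inc[of n] elim(2) by simp
    have "1/2 < real (card {k \<in> ns ` {1..}. 1 \<le> k \<and> k \<le> ns n}) / real (ns n)"
      using elim(1) by (simp add: c_def)
    also have "\<dots> \<le> real n / real (ns n)"
      using le pos by (simp add: divide_right_mono)
    finally show ?case using pos by (simp add: field_simps)
  qed
  define g where "g = (\<lambda>n. real (card {k \<in> {p. 1 \<le> p \<and> ns p \<in> A}. 1 \<le> k \<and> k \<le> n}) / real n)"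
  have lim2: "(\<lambda>n. 2 * a (ns n)) \<longlonglongrightarrow> 0" using tendsto_mult_right_zero[OF a0s, of 2] by simp
  have "g \<longlonglongrightarrow> 0"
  proof (rule tendsto_sandwich[OF _ _ tendsto_const lim2])
    show "\<forall>\<^sub>F n in sequentially. 0 \<le> g n" by (simp add: g_def)
    show "\<forall>\<^sub>F n in sequentially. g n \<le> 2 * a (ns n)"
      using ev eventually_ge_at_top[of 1]
    proof eventually_elim
      case (elim n)
      have "card {k \<in> {p. 1 \<le> p \<and> ns p \<in> A}. 1 \<le> k \<and> k \<le> n}
            \<le> card (ns ` {k \<in> {p. 1 \<le> p \<and> ns p \<in> A}. 1 \<le> k \<and> k \<le> n})"
        using card_image[OF strict_mono_imp_inj_on[OF sm]] by simp
      also have "\<dots> \<le> card {k \<in> A. 1 \<le> k \<and> k \<le> ns n}"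
      proof (rule card_mono)
        show "finite {k \<in> A. 1 \<le> k \<and> k \<le> ns n}" by simp
        show "ns ` {k \<in> {p. 1 \<le> p \<and> ns p \<in> A}. 1 \<le> k \<and> k \<le> n} \<subseteq> {k \<in> A. 1 \<le> k \<and> k \<le> ns n}"
        proof
          fix k assume "k \<in> ns ` {k \<in> {p. 1 \<le> p \<and> ns p \<in> A}. 1 \<le> k \<and> k \<le> n}"
          then obtain p where p: "1 \<le> p" "ns p \<in> A" "p \<le> n" "k = ns p" by auto
          moreover have "p \<le> ns p" using inc .
          moreover have "ns p \<le> ns n" using p(3) sm by (simp add: strict_mono_less_eq)
          ultimately show "k \<in> {k \<in> A. 1 \<le> k \<and> k \<le> ns n}" by simp
        qed
      qed
      finally have le: "real (card {k \<in> {p. 1 \<le> p \<and> ns p \<in> A}. 1 \<le> k \<and> k \<le> n})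
          \<le> real (card {k \<in> A. 1 \<le> k \<and> k \<le> ns n})" by simp
      have npos: "real n > 0" using elim(2) by simp
      have nspos: "real (ns n) > 0" using inc[of n] elim(2) by simp
      have "g n \<le> real (card {k \<in> A. 1 \<le> k \<and> k \<le> ns n}) / real n"
        unfolding g_def using le npos by (simp add: divide_right_mono)
      also have "\<dots> \<le> 2 * a (ns n)"
      proof -
        define C where "C = real (card {k \<in> A. 1 \<le> k \<and> k \<le> ns n})"
        have "C * real (ns n) \<le> C * (2 * real n)"
          using elim(1) by (intro mult_left_mono) (auto simp: C_def)
        then show ?thesis unfolding a_def C_def[symmetric] using npos nspos
          by (simp add: field_simps)
      qed
      finally show ?case .
    qed
  qed
  then show ?thesis unfolding has_natural_density_def g_def .
qed

theorem theorem4p7: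
  fixes X :: "'a set" and S :: "'a \<Rightarrow> 'a \<Rightarrow> 'a \<Rightarrow> real"
    and r :: real and x :: "nat \<Rightarrow> 'a" and ns :: "nat \<Rightarrow> nat"
  assumes "S_metric X S"
    and "r \<ge> 0"
    and "\<And>n. x n \<in> X"
    and "strict_mono ns"
    and "\<And>p. 1 \<le> p \<Longrightarrow> 1 \<le> ns p"
    and "has_natural_density (ns ` {1..}) 1"
  shows "st_LIM X S r x \<subseteq> st_LIM X S r (\<lambda>p. x (ns p))"
proof
  fix z assume z: "z \<in> st_LIM X S r x"
  show "z \<in> st_LIM X S r (\<lambda>p. x (ns p))"
    unfolding st_LIM_def
  proof (intro CollectI conjI allI impI)
    show "z \<in> X" using z by (simp add: st_LIM_def)
    fix e :: real assume "e > 0"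
    then have d: "has_natural_density {n. 1 \<le> n \<and> S (x n) (x n) z \<ge> r + e} 0"
      using z by (simp add: st_LIM_def)
    have eq: "{p. 1 \<le> p \<and> S (x (ns p)) (x (ns p)) z \<ge> r + e}
        = {p. 1 \<le> p \<and> ns p \<in> {n. 1 \<le> n \<and> S (x n) (x n) z \<ge> r + e}}"
      using assms(5) by auto
    show "has_natural_density {p. 1 \<le> p \<and> S (x (ns p)) (x (ns p)) z \<ge> r + e} 0"
      unfolding eq by (rule key[OF d assms(4) assms(6)])
  qed
qed

end
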